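(* Every first-countable almost compact Tychonoff space has cardinality at most $\mathfrak{c}$.
   Context: A Tychonoff space is almost compact if its Čech–Stone remainder has at most one point, i.e. its Čech–Stone compactification coincides with its one-point compactification. *)

theory Defs
  imports "HOL-Analysis.Analysis"
begin

definition tychonoff_space :: "'a topology \<Rightarrow> bool" where
  "tychonoff_space X \<longleftrightarrow> completely_regular_space X \<and> Hausdorff_space X"

definition stone_cech_compactification :: "'a topology \<Rightarrow> 'a option topology \<Rightarrow> bool" where
  "stone_cech_compactification X Y \<longleftrightarrow>
     compact_space Y \<and> Hausdorff_space Y \<and>
     embedding_map X Y Some \<and>
     Y closure_of (Some ` topspace X) = topspace Y \<and>
     (\<forall>f. continuous_map X (top_of_set {0..1::real}) f \<longrightarrow>
        (\<exists>g. continuous_map Y (top_of_set {0..1::real}) g \<and>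
             (\<forall>x\<in>topspace X. g (Some x) = f x)))"

text \<open>Since the remainder
  has at most one point, the compactification can be realised on 'a option with the only
  possible remainder point None.\<close>
definition almost_compact :: "'a topology \<Rightarrow> bool" where
  "almost_compact X \<longleftrightarrow>
     (\<exists>Y. stone_cech_compactification X Y \<and> topspace Y \<subseteq> insert None (Some ` topspace X))"

end

theory Submission
  imports Defs
begin

datatype 'l tr = Lf | Nd 'l "nat \<Rightarrow> 'l tr"

primrec evt :: "'b \<Rightarrow> ('l \<Rightarrow> (nat \<Rightarrow> 'b) \<Rightarrow> 'b) \<Rightarrow> 'l tr \<Rightarrow> 'b" where
  "evt a g Lf = a"
| "evt a g (Nd l f) = g l (\<lambda>n. evt a g (f n))"

primrec gr :: "'l tr \<Rightarrow> (nat list \<times> 'l) set" where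
  "gr Lf = {}"
| "gr (Nd l f) = insert ([], l) {(i # p, v) | i p v. (p, v) \<in> gr (f i)}"

lemma gr_inj: "gr t = gr t' \<Longrightarrow> t = t'"
proof (induction t arbitrary: t')
  case Lf
  then show ?case by (cases t') auto
next
  case (Nd l f)
  show ?case
  proof (cases t')
    case Lf
    then show ?thesis using Nd.prems by simp
  next
    case (Nd l' f')
    have ll: "l = l'" using Nd.prems \<open>t' = Nd l' f'\<close> by auto
    have "f i = f' i" for i
    proof -
      have "gr (f i) = gr (f' i)"
      proof -
        have "(p, v) \<in> gr (f i) \<longleftrightarrow> (p, v) \<in> gr (f' i)" for p v
        proof -
          have "(p, v) \<in> gr (f i) \<longleftrightarrow> (i # p, v) \<in> gr (Nd l f)" by auto
          also have "\<dots> \<longleftrightarrow> (i # p, v) \<in> gr (Nd l' f')" using Nd.prems \<open>t' = Nd l' f'\<close> by simp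
          also have "\<dots> \<longleftrightarrow> (p, v) \<in> gr (f' i)" by auto
          finally show ?thesis .
        qed
        then show ?thesis by auto
      qed
      then show ?thesis using Nd.IH by blast
    qed
    then show ?thesis using ll \<open>t' = Nd l' f'\<close> by auto
  qed
qed

lemma tr_lepoll: "(UNIV :: ('l::countable) tr set) \<lesssim> (UNIV :: real set)"
proof -
  have "(UNIV :: 'l tr set) \<lesssim> (UNIV :: nat set set)"
    unfolding lepoll_def
  proof (intro exI conjI)
    show "inj_on (\<lambda>t. to_nat ` gr t) (UNIV :: 'l tr set)"
      by (meson gr_inj inj_image_eq_iff inj_onI inj_to_nat)
  qed auto
  also have "\<dots> \<approx> (UNIV :: real set)" by (rule nat_sets_eqpoll_reals)
  finally show ?thesis .
qed

lemma evt_closed: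
  assumes "\<forall>n. s n \<in> range (evt a g)"
  shows "g l s \<in> range (evt a g)"
proof -
  define f where "f n = (SOME t. evt a g t = s n)" for n
  have "evt a g (f n) = s n" for n
    using assms unfolding f_def by (metis (mono_tags, lifting) rangeE someI)
  then have "evt a g (Nd l f) = g l s" by simp
  then show ?thesis by (metis rangeI)
qed

lemma evt_in:
  assumes "a \<in> S" "\<And>l s. g l s \<in> S"
  shows "evt a g t \<in> S"
  by (induction t) (auto simp: assms)


lemma core:
  fixes Y :: "'b topology" and S :: "'b set"
  assumes comp: "compact_space Y" and haus: "Hausdorff_space Y" and Sopen: "openin Y S"
  and fc: "\<forall>x\<in>S. \<exists>\<B>. countable \<B> \<and> (\<forall>V\<in>\<B>. openin Y V) \<and> (\<forall>U. openin Y U \<and> x \<in> U \<longrightarrow> (\<exists>V\<in>\<B>. x \<in> V \<and> V \<subseteq> U))"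
  shows "\<exists>F. F \<subseteq> S \<and> F \<lesssim> (UNIV::real set) \<and> openin Y F \<and> (\<forall>x\<in>S. x \<in> Y closure_of F \<longrightarrow> x \<in> F) \<and> (closedin Y F \<longrightarrow> F = S)"
proof (cases "S = {}")
  case True then show ?thesis by (intro exI[of _ "{}"]) (simp add: lepoll_def)
next
  case False
  then obtain x0 where x0: "x0 \<in> S" by blast
  have Stop: "S \<subseteq> topspace Y" using Sopen openin_subset by blast
  define P where "P y b \<longleftrightarrow> (\<forall>n. openin Y (b n) \<and> y \<in> b n \<and> b n \<subseteq> S) \<and> (\<forall>U. openin Y U \<and> y \<in> U \<longrightarrow> (\<exists>n. b n \<subseteq> U))" for y and b :: "nat \<Rightarrow> 'b set"
  have "\<forall>y\<in>S. \<exists>b. P y b"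
  proof
    fix y assume y: "y \<in> S"
    obtain \<B> where BB: "countable \<B> \<and> (\<forall>V\<in>\<B>. openin Y V) \<and> (\<forall>U. openin Y U \<and> y \<in> U \<longrightarrow> (\<exists>V\<in>\<B>. y \<in> V \<and> V \<subseteq> U))"
      using bspec[OF fc y] by (rule exE)
    note B = BB[THEN conjunct1] BB[THEN conjunct2, THEN conjunct1] BB[THEN conjunct2, THEN conjunct2]
    define \<C> where "\<C> = {V \<in> \<B>. y \<in> V \<and> V \<subseteq> S}"
    have cC: "countable \<C>" using B(1) unfolding \<C>_def by simp
    obtain V0 where "V0 \<in> \<B>" "y \<in> V0" "V0 \<subseteq> S" using B(3)[rule_format, of S] Sopen y by blast
    then have nC: "\<C> \<noteq> {}" unfolding \<C>_def by blast
    define b where "b = from_nat_into \<C>"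
    have rb: "range b = \<C>" using cC nC unfolding b_def by simp
    have P1: "\<forall>n. openin Y (b n) \<and> y \<in> b n \<and> b n \<subseteq> S"
    proof
      fix n
      have "b n \<in> \<C>" using rb by blast
      then show "openin Y (b n) \<and> y \<in> b n \<and> b n \<subseteq> S" using B(2) unfolding \<C>_def by auto
    qed
    have P2: "\<forall>U. openin Y U \<and> y \<in> U \<longrightarrow> (\<exists>n. b n \<subseteq> U)"
    proof (intro allI impI)
      fix U assume U: "openin Y U \<and> y \<in> U"
      have "openin Y (U \<inter> S)" "y \<in> U \<inter> S" using U Sopen y by auto
      then obtain V where "V \<in> \<B>" "y \<in> V" "V \<subseteq> U \<inter> S" using B(3)[rule_format, of "U \<inter> S"] by blast
      then have "V \<in> range b" using rb unfolding \<C>_def by auto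
      then show "\<exists>n. b n \<subseteq> U" using \<open>V \<subseteq> U \<inter> S\<close> by auto
    qed
    show "\<exists>b. P y b" unfolding P_def
      by (intro exI[of _ b] conjI P1 P2)
  qed
  then obtain bas where basH: "\<forall>y\<in>S. P y (bas y)" using bchoice[of S P] by blast
  have bas: "\<And>y n. y \<in> S \<Longrightarrow> openin Y (bas y n) \<and> y \<in> bas y n \<and> bas y n \<subseteq> S"
    using basH unfolding P_def by blast
  have basU: "\<And>y U. y \<in> S \<Longrightarrow> openin Y U \<Longrightarrow> y \<in> U \<Longrightarrow> \<exists>n. bas y n \<subseteq> U"
    using basH unfolding P_def by blast
  define Cof :: "(nat \<times> nat) option \<Rightarrow> (nat \<Rightarrow> 'b) \<Rightarrow> 'b set" where
    "Cof c s = (case c of None \<Rightarrow> topspace Y | Some (i,j) \<Rightarrow> Y closure_of bas (s i) j)" for c s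
  define Wof :: "(nat \<times> nat) list \<Rightarrow> (nat \<Rightarrow> 'b) \<Rightarrow> 'b set" where
    "Wof ks s = (\<Union>(i,j)\<in>set ks. bas (s i) j)" for ks s
  define G :: "((nat \<times> nat) list \<times> (nat \<times> nat) option) option \<Rightarrow> (nat \<Rightarrow> 'b) \<Rightarrow> 'b" where
    "G l s = (case l of None \<Rightarrow> (if \<exists>x\<in>S. limitin Y s x sequentially then (SOME x. x \<in> S \<and> limitin Y s x sequentially) else x0)
       | Some (ks, c) \<Rightarrow> (if \<exists>z. z \<in> Cof c s \<inter> S - Wof ks s then (SOME z. z \<in> Cof c s \<inter> S - Wof ks s) else x0))" for l s
  define F where "F = range (evt x0 G)"
  have GS: "G l s \<in> S" for l s
  proof (cases l)
    case None
    have "(SOME x. x \<in> S \<and> limitin Y s x sequentially) \<in> S" if "\<exists>x\<in>S. limitin Y s x sequentially"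
      using someI_ex[of "\<lambda>x. x \<in> S \<and> limitin Y s x sequentially"] that by blast
    then show ?thesis unfolding G_def using x0 None by simp
  next
    case (Some a)
    obtain ks c where a: "a = (ks, c)" by (cases a)
    have "(SOME z. z \<in> Cof c s \<inter> S - Wof ks s) \<in> S" if "\<exists>z. z \<in> Cof c s \<inter> S - Wof ks s"
      using someI_ex[of "\<lambda>z. z \<in> Cof c s \<inter> S - Wof ks s"] that by blast
    then show ?thesis unfolding G_def using x0 Some a by simp
  qed
  have FS: "F \<subseteq> S" unfolding F_def using evt_in[of x0 S G, OF x0 GS] by blast
  have x0F: "x0 \<in> F" unfolding F_def by (metis evt.simps(1) rangeI)
  have Fcl: "\<And>s l. (\<forall>n. s n \<in> F) \<Longrightarrow> G l s \<in> F" unfolding F_def by (rule evt_closed)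
  have Fcard: "F \<lesssim> (UNIV::real set)"
    unfolding F_def by (rule lepoll_trans[OF image_lepoll tr_lepoll])
  have closure1: "x \<in> F" if x: "x \<in> S" "x \<in> Y closure_of F" for x
  proof -
    define D where "D = rec_nat (bas x 0) (\<lambda>n A. A \<inter> bas x (Suc n))"
    have D0: "D 0 = bas x 0" and DS: "D (Suc n) = D n \<inter> bas x (Suc n)" for n unfolding D_def by simp_all
    have Dop: "openin Y (D n) \<and> x \<in> D n \<and> D n \<subseteq> bas x n" for n
      by (induction n) (auto simp: D0 DS bas x intro!: openin_Int)
    have Ddec: "n \<le> m \<Longrightarrow> D m \<subseteq> D n" for n m
      by (induction m rule: dec_induct) (auto simp: DS)
    have "\<forall>n. \<exists>z. z \<in> F \<and> z \<in> D n" using x(2) Dop unfolding in_closure_of by blast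
    then obtain s where s: "\<And>n. s n \<in> F \<and> s n \<in> D n" by metis
    have lim: "limitin Y s x sequentially"
      unfolding limitin_sequentially
    proof (intro conjI allI impI)
      show "x \<in> topspace Y" using x Stop by blast
      fix U assume "openin Y U \<and> x \<in> U"
      then obtain n where "bas x n \<subseteq> U" using basU x by blast
      then show "\<exists>N. \<forall>m. N \<le> m \<longrightarrow> s m \<in> U" using s Ddec Dop by blast
    qed
    have "G None s \<in> F" using Fcl s by blast
    moreover have "G None s = x"
    proof -
      have ex: "\<exists>x\<in>S. limitin Y s x sequentially" using lim x by blast
      have "(SOME x. x \<in> S \<and> limitin Y s x sequentially) = x"
      proof (rule someI2[of _ x])
        show "x \<in> S \<and> limitin Y s x sequentially" using lim x by blast
      next
        fix y assume "y \<in> S \<and> limitin Y s y sequentially"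
        then show "y = x" using limitin_Hausdorff_unique lim haus by fastforce
      qed
      then show ?thesis using ex unfolding G_def by simp
    qed
    ultimately show ?thesis by simp
  qed
  define Cof' where "Cof' cc = (case cc of None \<Rightarrow> topspace Y | Some (y,n) \<Rightarrow> Y closure_of bas y n)" for cc
  have key: False if K: "compactin Y K" "K \<subseteq> F" and x: "x \<in> S" "x \<notin> F"
     and cc: "case cc of None \<Rightarrow> True | Some (y,n) \<Rightarrow> y \<in> F" and CK: "Cof' cc \<inter> F \<subseteq> K" and xC: "x \<in> Cof' cc"
     for K x cc
  proof -
    have ex: "\<forall>z\<in>K. \<exists>m. x \<notin> bas z m"
    proof
      fix z assume z: "z \<in> K"
      have zS: "z \<in> S" using z K(2) FS by blast
      have zx: "z \<noteq> x" using z K(2) x(2) by blast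
      have "z \<in> topspace Y" "x \<in> topspace Y" using zS x(1) Stop by blast+
      then have "\<exists>U V. openin Y U \<and> openin Y V \<and> z \<in> U \<and> x \<in> V \<and> disjnt U V"
        using haus zx unfolding Hausdorff_space_def by simp
      then obtain U V where UV: "openin Y U" "openin Y V" "z \<in> U" "x \<in> V" "disjnt U V"
        by blast
      obtain n where "bas z n \<subseteq> U" using basU[OF zS UV(1) UV(3)] by blast
      then have "x \<notin> bas z n" using UV(4,5) by (auto simp: disjnt_iff)
      then show "\<exists>m. x \<notin> bas z m" ..
    qed
    define Q where "Q z m \<longleftrightarrow> x \<notin> bas z m" for z m
    have "\<forall>z\<in>K. \<exists>m. Q z m" using ex unfolding Q_def .
    then obtain m where mQ: "\<forall>z\<in>K. Q z (m z)" using bchoice[of K Q] by blast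
    have m: "\<And>z. z \<in> K \<Longrightarrow> x \<notin> bas z (m z)" using mQ unfolding Q_def by blast
    have bK: "\<And>z. z \<in> K \<Longrightarrow> openin Y (bas z (m z)) \<and> z \<in> bas z (m z)"
      using bas K(2) FS by blast
    have cov: "K \<subseteq> \<Union>((\<lambda>z. bas z (m z)) ` K)" using bK by blast
    have opn: "\<forall>U\<in>(\<lambda>z. bas z (m z)) ` K. openin Y U" using bK by blast
    have "\<exists>\<F>. finite \<F> \<and> \<F> \<subseteq> (\<lambda>z. bas z (m z)) ` K \<and> K \<subseteq> \<Union>\<F>"
      using K(1) cov opn unfolding compactin_def by simp
    then obtain \<F> where "finite \<F>" "\<F> \<subseteq> (\<lambda>z. bas z (m z)) ` K" "K \<subseteq> \<Union>\<F>"
      by blast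
    then obtain K' where K': "K' \<subseteq> K" "finite K'" "\<F> = (\<lambda>z. bas z (m z)) ` K'"
      using finite_subset_image[of \<F> "\<lambda>z. bas z (m z)" K] by blast
    obtain zs where zs: "set zs = K'" using finite_list K'(2) by blast
    define yc where "yc = (case cc of None \<Rightarrow> x0 | Some (y,n) \<Rightarrow> y)"
    define s where "s i = (if i < length zs then zs ! i else yc)" for i
    define ks where "ks = map (\<lambda>i. (i, m (zs ! i))) [0..<length zs]"
    define c where "c = map_option (\<lambda>(y,n). (length zs, n)) cc"
    have sF: "\<forall>n. s n \<in> F"
    proof
      fix n
      have "yc \<in> F" using cc x0F unfolding yc_def by (auto split: option.splits)
      moreover have "zs ! n \<in> F" if "n < length zs" using that zs K' K by (meson nth_mem subsetD)
      ultimately show "s n \<in> F" unfolding s_def by auto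
    qed
    have W: "Wof ks s = \<Union>\<F>"
    proof -
      have sk: "set ks = (\<lambda>i. (i, m (zs ! i))) ` {..<length zs}"
        unfolding ks_def by auto
      have "Wof ks s = (\<Union>i\<in>{..<length zs}. bas (s i) (m (zs ! i)))"
        unfolding Wof_def sk by (simp add: image_image)
      also have "\<dots> = (\<Union>i\<in>{..<length zs}. bas (zs ! i) (m (zs ! i)))"
        unfolding s_def by simp
      also have "\<dots> = (\<Union>z\<in>(\<lambda>i. zs ! i) ` {..<length zs}. bas z (m z))"
        by (simp add: image_image)
      also have "(\<lambda>i. zs ! i) ` {..<length zs} = set zs"
        by (auto simp: in_set_conv_nth)
      finally show ?thesis using zs K'(3) by simp
    qed
    have C: "Cof c s = Cof' cc"
    proof (cases cc)
      case None
      then show ?thesis unfolding Cof_def Cof'_def c_def by simp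
    next
      case (Some a)
      obtain y n where a: "a = (y, n)" by (cases a)
      show ?thesis unfolding Cof_def Cof'_def c_def s_def yc_def using Some a by simp
    qed
    have xW: "x \<notin> Wof ks s"
    proof
      assume "x \<in> Wof ks s"
      then obtain z where "z \<in> K'" "x \<in> bas z (m z)" using W K'(3) by blast
      then show False using m K'(1) by blast
    qed
    have xin: "x \<in> Cof c s \<inter> S - Wof ks s" using C xC x(1) xW by blast
    define w where "w = G (Some (ks, c)) s"
    have "w = (SOME z. z \<in> Cof c s \<inter> S - Wof ks s)"
      using xin unfolding w_def G_def by auto
    then have "w \<in> Cof c s \<inter> S - Wof ks s"
      using xin someI_ex[of "\<lambda>z. z \<in> Cof c s \<inter> S - Wof ks s"] by auto
    moreover have "w \<in> F" unfolding w_def using Fcl sF by blast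
    ultimately have "w \<in> K" "w \<notin> \<Union>\<F>" using C CK W by blast+
    then show False using \<open>K \<subseteq> \<Union>\<F>\<close> by blast
  qed
  have reg: "regular_space Y" by (rule compact_Hausdorff_imp_regular_space[OF comp haus])
  have Fopen: "openin Y F"
  proof (rule openin_subopen[THEN iffD2], rule ballI)
    fix y assume yF: "y \<in> F"
    then have yS: "y \<in> S" using FS by blast
    have c: "closedin Y (topspace Y - S)" by (rule closedin_diff[OF closedin_topspace Sopen])
    have y': "y \<in> topspace Y - (topspace Y - S)" using yS Stop by blast
    have "\<exists>U. openin Y U \<and> y \<in> U \<and> disjnt (topspace Y - S) (Y closure_of U)"
      using regular_space[THEN iffD1, OF reg, rule_format, OF conjI[OF c y']] .
    then obtain U where U: "openin Y U" "y \<in> U" "disjnt (topspace Y - S) (Y closure_of U)"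
      by blast
    have clU: "Y closure_of U \<subseteq> S" using U(3) closure_of_subset_topspace[of Y U] unfolding disjnt_def by blast
    obtain n where n: "bas y n \<subseteq> U" using basU[OF yS U(1) U(2)] by blast
    have clb: "Y closure_of bas y n \<subseteq> S" using closure_of_mono[OF n] clU by blast
    have clbF: "Y closure_of bas y n \<subseteq> F"
    proof (rule ccontr)
      assume "\<not> ?thesis"
      then obtain x where xc: "x \<in> Y closure_of bas y n" "x \<notin> F" by blast
      define K where "K = F \<inter> Y closure_of bas y n"
      have "Y closure_of K \<subseteq> K"
      proof
        fix p assume p: "p \<in> Y closure_of K"
        have "p \<in> Y closure_of (Y closure_of bas y n)"
          using closure_of_mono[of K "Y closure_of bas y n" Y] p unfolding K_def by blast
        then have p1: "p \<in> Y closure_of bas y n" by simp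
        have p2: "p \<in> Y closure_of F" using closure_of_mono[of K F Y] p unfolding K_def by blast
        have "p \<in> F" using closure1[of p] p1 p2 clb by blast
        then show "p \<in> K" unfolding K_def using p1 by blast
      qed
      moreover have "K \<subseteq> topspace Y" unfolding K_def using FS Stop by blast
      ultimately have "closedin Y K" using closure_of_subset_eq by blast
      then have cK: "compactin Y K" using comp closedin_compact_space by blast
      have c1: "K \<subseteq> F" unfolding K_def by blast
      have c2: "case Some (y, n) of None \<Rightarrow> True | Some (y,n) \<Rightarrow> y \<in> F" using yF by simp
      have c3: "Cof' (Some (y, n)) \<inter> F \<subseteq> K" unfolding Cof'_def K_def by auto
      have c4: "x \<in> Cof' (Some (y, n))" unfolding Cof'_def using xc by simp
      have xS: "x \<in> S" using xc(1) clb by blast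
      show False using key[OF cK c1 xS xc(2) c2 c3 c4] .
    qed
    have "openin Y (bas y n)" using bas[OF yS, of n] by blast
    then have "bas y n \<subseteq> topspace Y" by (rule openin_subset)
    then have "bas y n \<subseteq> Y closure_of bas y n" by (rule closure_of_subset)
    then show "\<exists>T. openin Y T \<and> y \<in> T \<and> T \<subseteq> F"
      using bas[OF yS, of n] clbF by blast
  qed
  have Fclosed: "F = S" if cF: "closedin Y F"
  proof (rule ccontr)
    assume "F \<noteq> S"
    then obtain x where xS: "x \<in> S" "x \<notin> F" using FS by blast
    have cK: "compactin Y F" using comp closedin_compact_space cF by blast
    have c2: "case None of None \<Rightarrow> True | Some (y,n) \<Rightarrow> y \<in> F" by simp
    have c3: "Cof' None \<inter> F \<subseteq> F" by blast
    have c4: "x \<in> Cof' None" unfolding Cof'_def using xS Stop by auto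
    show False using key[OF cK subset_refl xS c2 c3 c4] .
  qed
  show ?thesis
  proof (intro exI[of _ F] conjI FS Fcard Fopen ballI impI)
    fix x assume "x \<in> S" "x \<in> Y closure_of F" then show "x \<in> F" by (rule closure1)
  next
    assume "closedin Y F" then show "F = S" by (rule Fclosed)
  qed
qed


lemma compact_fc:
  fixes Z :: "'b topology"
  assumes comp: "compact_space Z" and haus: "Hausdorff_space Z" and fcZ: "first_countable Z"
  shows "topspace Z \<lesssim> (UNIV::real set)"
proof -
  have fc: "\<forall>x\<in>topspace Z. \<exists>\<B>. countable \<B> \<and> (\<forall>V\<in>\<B>. openin Z V) \<and> (\<forall>U. openin Z U \<and> x \<in> U \<longrightarrow> (\<exists>V\<in>\<B>. x \<in> V \<and> V \<subseteq> U))"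
    using fcZ unfolding first_countable_def .
  obtain F where FF: "F \<subseteq> topspace Z \<and> F \<lesssim> (UNIV::real set) \<and> openin Z F \<and>
     (\<forall>x\<in>topspace Z. x \<in> Z closure_of F \<longrightarrow> x \<in> F) \<and> (closedin Z F \<longrightarrow> F = topspace Z)"
    using core[OF comp haus openin_topspace fc] by (rule exE)
  note F = FF[THEN conjunct1] FF[THEN conjunct2, THEN conjunct1] FF[THEN conjunct2, THEN conjunct2, THEN conjunct1]
     FF[THEN conjunct2, THEN conjunct2, THEN conjunct2, THEN conjunct1] FF[THEN conjunct2, THEN conjunct2, THEN conjunct2, THEN conjunct2]
  have "Z closure_of F \<subseteq> F"
  proof
    fix x assume x: "x \<in> Z closure_of F"
    have "x \<in> topspace Z" by (rule subsetD[OF closure_of_subset_topspace x])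
    then show "x \<in> F" using F(4) x by blast
  qed
  then have "closedin Z F" using closure_of_subset_eq[of F Z] F(1) by blast
  then have "F = topspace Z" using F(5) by blast
  then show ?thesis using F(2) by blast
qed

lemma union_lepoll_real:
  assumes "A \<lesssim> (UNIV::real set)" "B \<lesssim> (UNIV::real set)"
  shows "A \<union> B \<lesssim> (UNIV::real set)"
proof -
  have e1: "(UNIV::real set) \<approx> {0<..<1::real}"
    using open_interval_eqpoll_reals[of 0 1] by (simp add: eqpoll_sym)
  have e2: "(UNIV::real set) \<approx> {2<..<3::real}"
    using open_interval_eqpoll_reals[of 2 3] by (simp add: eqpoll_sym)
  have "A \<lesssim> {0<..<1::real}" by (rule lepoll_trans2[OF assms(1) e1])
  moreover have "B \<lesssim> {2<..<3::real}" by (rule lepoll_trans2[OF assms(2) e2])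
  moreover have "disjnt {0<..<1::real} {2<..<3}" by (auto simp: disjnt_def)
  ultimately have "A \<union> B \<lesssim> {0<..<1::real} \<union> {2<..<3}" by (rule Un_lepoll_mono)
  also have "\<dots> \<lesssim> (UNIV::real set)" by (rule subset_imp_lepoll) simp
  finally show ?thesis .
qed

theorem mainTheorem12:
  fixes X :: "'a topology"
  assumes "tychonoff_space X" and "first_countable X" and "almost_compact X"
  shows "topspace X \<lesssim> (UNIV :: real set)"
proof -
  note fcX = assms(2)
  obtain Y where Y: "stone_cech_compactification X Y" "topspace Y \<subseteq> insert None (Some ` topspace X)"
    using assms(3) unfolding almost_compact_def by blast
  have comp: "compact_space Y" and haus: "Hausdorff_space Y" and emb: "embedding_map X Y Some"
    and ext: "\<forall>f. continuous_map X (top_of_set {0..1::real}) f \<longrightarrow>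
        (\<exists>g. continuous_map Y (top_of_set {0..1::real}) g \<and> (\<forall>x\<in>topspace X. g (Some x) = f x))"
    using Y(1) unfolding stone_cech_compactification_def by simp_all
  define S where "S = Some ` topspace X"
  have hom: "X homeomorphic_space subtopology Y S"
    using embedding_map_imp_homeomorphic_space[OF emb] unfolding S_def .
  have cS: "continuous_map X (subtopology Y S) Some"
    using emb unfolding embedding_map_def S_def by (rule homeomorphic_imp_continuous_map)
  then have contSome: "continuous_map X Y Some" using continuous_map_in_subtopology by blast
  have SY: "S \<subseteq> topspace Y" unfolding S_def using continuous_map_image_subset_topspace[OF contSome] .
  have Seq: "S = topspace Y - {None}" using Y(2) SY unfolding S_def by auto
  have Sopen: "openin Y S"
  proof (cases "None \<in> topspace Y")
    case True
    have "closedin Y {None}" by (rule closedin_Hausdorff_singleton[OF haus True])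
    then have "openin Y (topspace Y - {None})" by (rule openin_diff[OF openin_topspace])
    then show ?thesis using Seq by simp
  next
    case False
    then have "S = topspace Y" using Seq by blast
    then show ?thesis using openin_topspace[of Y] by simp
  qed
  have fcS: "first_countable (subtopology Y S)"
    using homeomorphic_space_first_countability[OF hom] fcX by simp
  have fc: "\<forall>x\<in>S. \<exists>\<B>. countable \<B> \<and> (\<forall>V\<in>\<B>. openin Y V) \<and> (\<forall>U. openin Y U \<and> x \<in> U \<longrightarrow> (\<exists>V\<in>\<B>. x \<in> V \<and> V \<subseteq> U))"
  proof
    fix x assume x: "x \<in> S"
    then have xt: "x \<in> topspace (subtopology Y S)" using SY by auto
    obtain \<B> where BB: "countable \<B> \<and> (\<forall>V\<in>\<B>. openin (subtopology Y S) V) \<and> (\<forall>U. openin (subtopology Y S) U \<and> x \<in> U \<longrightarrow> (\<exists>V\<in>\<B>. x \<in> V \<and> V \<subseteq> U))"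
      using bspec[OF fcS[unfolded first_countable_def] xt] by (rule exE)
    note B = BB[THEN conjunct1] BB[THEN conjunct2, THEN conjunct1] BB[THEN conjunct2, THEN conjunct2]
    have B2: "\<forall>V\<in>\<B>. openin Y V" using B(2) openin_open_subtopology[OF Sopen] by blast
    have B3: "\<forall>U. openin Y U \<and> x \<in> U \<longrightarrow> (\<exists>V\<in>\<B>. x \<in> V \<and> V \<subseteq> U)"
    proof (intro allI impI)
      fix U assume U: "openin Y U \<and> x \<in> U"
      have "openin (subtopology Y S) (U \<inter> S)"
        using openin_open_subtopology[OF Sopen, of "U \<inter> S"] U Sopen by blast
      then obtain V where "V \<in> \<B>" "x \<in> V" "V \<subseteq> U \<inter> S" using B(3)[rule_format, of "U \<inter> S"] U x by blast
      then show "\<exists>V\<in>\<B>. x \<in> V \<and> V \<subseteq> U" by blast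
    qed
    show "\<exists>\<B>. countable \<B> \<and> (\<forall>V\<in>\<B>. openin Y V) \<and> (\<forall>U. openin Y U \<and> x \<in> U \<longrightarrow> (\<exists>V\<in>\<B>. x \<in> V \<and> V \<subseteq> U))"
      by (intro exI[of _ \<B>] conjI B(1) B2 B3)
  qed
  obtain F where FF: "F \<subseteq> S \<and> F \<lesssim> (UNIV::real set) \<and> openin Y F \<and>
     (\<forall>x\<in>S. x \<in> Y closure_of F \<longrightarrow> x \<in> F) \<and> (closedin Y F \<longrightarrow> F = S)"
    using core[OF comp haus Sopen fc] by (rule exE)
  note F = FF[THEN conjunct1] FF[THEN conjunct2, THEN conjunct1] FF[THEN conjunct2, THEN conjunct2, THEN conjunct1]
     FF[THEN conjunct2, THEN conjunct2, THEN conjunct2, THEN conjunct1] FF[THEN conjunct2, THEN conjunct2, THEN conjunct2, THEN conjunct2]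
  have Slep: "S \<lesssim> (UNIV::real set)"
  proof (cases "closedin Y F")
    case True
    then have "F = S" using F(5) by blast
    then show ?thesis using F(2) by blast
  next
    case False
    define A where "A = {x \<in> topspace X. Some x \<in> F}"
    define f where "f x = (if Some x \<in> F then 1 else 0::real)" for x
    have Aopen: "openin X A" unfolding A_def using openin_continuous_map_preimage[OF contSome F(3)] .
    have A2: "A = {x \<in> topspace X. Some x \<in> Y closure_of F}"
    proof -
      have "Some x \<in> F \<longleftrightarrow> Some x \<in> Y closure_of F" if "x \<in> topspace X" for x
      proof
        assume "Some x \<in> F" then show "Some x \<in> Y closure_of F"
          using closure_of_subset[of F Y] F(1) SY by blast
      next
        assume "Some x \<in> Y closure_of F" then show "Some x \<in> F"
          using F(4) that unfolding S_def by blast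
      qed
      then show ?thesis unfolding A_def by blast
    qed
    have Aclosed: "closedin X A" unfolding A2
      by (rule closedin_continuous_map_preimage[OF contSome closedin_closure_of])
    have XA: "openin X (topspace X - A)" using Aclosed by (rule openin_diff[OF openin_topspace])
    have fcont: "continuous_map X (top_of_set {0..1::real}) f"
      unfolding continuous_map_def
    proof (intro conjI allI impI)
      show "f \<in> topspace X \<rightarrow> topspace (top_of_set {0..1::real})" by (auto simp: f_def)
      fix U :: "real set" assume "openin (top_of_set {0..1}) U"
      have eq: "{x \<in> topspace X. f x \<in> U} = (if (1::real) \<in> U then A else {}) \<union> (if (0::real) \<in> U then topspace X - A else {})"
        by (auto simp: f_def A_def)
      show "openin X {x \<in> topspace X. f x \<in> U}"
        unfolding eq using Aopen XA by (simp add: openin_Un)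
    qed
    obtain g where g: "continuous_map Y (top_of_set {0..1::real}) g" "\<forall>x\<in>topspace X. g (Some x) = f x"
      using ext fcont by blast
    have gc: "continuous_map Y euclideanreal g" using g(1) continuous_map_in_subtopology by blast
    have cl1: "closedin Y {y \<in> topspace Y. g y \<in> {c}}" for c :: real
      by (rule closedin_continuous_map_preimage[OF gc]) simp
    have SomeX: "x \<in> topspace X" if "Some x \<in> topspace Y" for x
      using that Y(2) by auto
    have gS: "g (Some x) = (if Some x \<in> F then 1 else 0)" if "Some x \<in> topspace Y" for x
      using g(2) SomeX[OF that] unfolding f_def by simp
    have NF: "None \<notin> F" using F(1) unfolding S_def by blast
    have SFc: "closedin Y (S - F)"
    proof (cases "None \<in> topspace Y \<and> g None = 1")
      case True
      have "{y \<in> topspace Y. g y \<in> {0}} = S - F"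
      proof (intro set_eqI iffI)
        fix y assume y: "y \<in> {y \<in> topspace Y. g y \<in> {0}}"
        show "y \<in> S - F"
        proof (cases y)
          case None then show ?thesis using y True by simp
        next
          case (Some x) then show ?thesis using y gS[of x] Seq by (auto split: if_splits)
        qed
      next
        fix y assume y: "y \<in> S - F"
        then obtain x where x: "y = Some x" "x \<in> topspace X" unfolding S_def by blast
        then show "y \<in> {y \<in> topspace Y. g y \<in> {0}}" using y gS[of x] SY by auto
      qed
      then show ?thesis using cl1[of 0] by simp
    next
      case False
      have "{y \<in> topspace Y. g y \<in> {1}} = F"
      proof (intro set_eqI iffI)
        fix y assume y: "y \<in> {y \<in> topspace Y. g y \<in> {1}}"
        show "y \<in> F"
        proof (cases y)
          case None then show ?thesis using y False by simp
        next
          case (Some x) then show ?thesis using y gS[of x] by (auto split: if_splits)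
        qed
      next
        fix y assume y: "y \<in> F"
        then obtain x where x: "y = Some x" "x \<in> topspace X" using F(1) unfolding S_def by blast
        then show "y \<in> {y \<in> topspace Y. g y \<in> {1}}" using y gS[of x] SY F(1) by auto
      qed
      then have "closedin Y F" using cl1[of 1] by simp
      then show ?thesis using \<open>\<not> closedin Y F\<close> by simp
    qed
    have csub: "compact_space (subtopology Y (S - F))"
      by (rule compact_space_subtopology[OF closedin_compact_space[OF comp SFc]])
    have hsub: "Hausdorff_space (subtopology Y (S - F))" using haus by (rule Hausdorff_space_subtopology)
    have "first_countable (subtopology (subtopology Y S) (S - F))" using fcS by (rule first_countable_subtopology)
    moreover have "subtopology (subtopology Y S) (S - F) = subtopology Y (S - F)"
      by (simp add: subtopology_subtopology Int_absorb1)
    ultimately have fsub: "first_countable (subtopology Y (S - F))" by simp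
    have "topspace (subtopology Y (S - F)) \<lesssim> (UNIV::real set)" by (rule compact_fc[OF csub hsub fsub])
    moreover have "topspace (subtopology Y (S - F)) = S - F" using SY by auto
    ultimately have "S - F \<lesssim> (UNIV::real set)" by simp
    then have "F \<union> (S - F) \<lesssim> (UNIV::real set)" using F(2) by (intro union_lepoll_real)
    moreover have "F \<union> (S - F) = S" using F(1) by blast
    ultimately show ?thesis by simp
  qed
  have "topspace X \<lesssim> S" unfolding lepoll_def S_def by (intro exI[of _ Some]) (auto simp: inj_on_def)
  then show ?thesis using Slep by (rule lepoll_trans)
qed

end
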